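(* Let $G$ and $L$ be topological groups with $G$ a Baire space, and let $H$ be a first countable convergence group. Then every separately continuous bihomomorphism $u: G\times H\to L$ is jointly continuous (with respect to the product convergence structure on $G\times H$).
   Context: All groups are abelian. A convergence structure on a set $X$ assigns to each $x$ a collection of filters converging to $x$. This assignment must satisfy three conditions: point ultrafilters converge to their point; finite intersections of filters converging to $x$ converge to $x$; and finer filters of convergent filters converge. A map is continuous if it sends filters converging to $x$ to filters converging to the image of $x$. A convergence group is an abelian group with a convergence structure such that $\mathcal F\to x$, $\mathcal G\to y$ imply $\mathcal F-\mathcal G\to x-y$. Topological groups are convergence groups, with convergent filters being those finer than the neighbourhood filter. In the product convergence structure, a filter converges iff its projections converge. A convergence space is first countable if for every filter $\mathcal F\to x$ there is a filter $\mathcal V\subseteq\mathcal F$ with a countable base such that $\mathcal V\to x$. A bihomomorphism is a map that is a homomorphism in each variable. It is separately continuous if it is continuous in each variable separately. *)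

theory Defs
  imports "HOL-Analysis.Analysis"
begin

definition convergence_space :: "('a filter \<Rightarrow> 'a \<Rightarrow> bool) \<Rightarrow> bool" where
  "convergence_space conv \<longleftrightarrow>
     (\<forall>x. conv (principal {x}) x) \<and>
     (\<forall>F G x. conv F x \<and> conv G x \<longrightarrow> conv (sup F G) x) \<and>
     (\<forall>F G x. F \<le> G \<and> conv G x \<longrightarrow> conv F x)"

definition convergence_group :: "('a::ab_group_add filter \<Rightarrow> 'a \<Rightarrow> bool) \<Rightarrow> bool" where
  "convergence_group conv \<longleftrightarrow> convergence_space conv \<and>
     (\<forall>F G x y. conv F x \<and> conv G y \<longrightarrow>
        conv (filtermap (\<lambda>(a, b). a - b) (F \<times>\<^sub>F G)) (x - y))"

definition top_conv :: "'a::topological_space filter \<Rightarrow> 'a \<Rightarrow> bool" where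
  "top_conv F x \<longleftrightarrow> F \<le> nhds x"

definition prod_conv ::
  "('a filter \<Rightarrow> 'a \<Rightarrow> bool) \<Rightarrow> ('b filter \<Rightarrow> 'b \<Rightarrow> bool) \<Rightarrow> ('a \<times> 'b) filter \<Rightarrow> 'a \<times> 'b \<Rightarrow> bool" where
  "prod_conv cA cB F p \<longleftrightarrow> cA (filtermap fst F) (fst p) \<and> cB (filtermap snd F) (snd p)"

definition conv_continuous ::
  "('a filter \<Rightarrow> 'a \<Rightarrow> bool) \<Rightarrow> ('b filter \<Rightarrow> 'b \<Rightarrow> bool) \<Rightarrow> ('a \<Rightarrow> 'b) \<Rightarrow> bool" where
  "conv_continuous cA cB f \<longleftrightarrow> (\<forall>F x. cA F x \<longrightarrow> cB (filtermap f F) (f x))"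

definition countable_base_filter :: "'a filter \<Rightarrow> bool" where
  "countable_base_filter V \<longleftrightarrow>
     (\<exists>B. countable B \<and> (\<forall>P. eventually P V \<longleftrightarrow> (\<exists>b\<in>B. \<forall>x\<in>b. P x)))"

definition first_countable_conv :: "('a filter \<Rightarrow> 'a \<Rightarrow> bool) \<Rightarrow> bool" where
  "first_countable_conv conv \<longleftrightarrow>
     (\<forall>F x. conv F x \<longrightarrow> (\<exists>V. F \<le> V \<and> countable_base_filter V \<and> conv V x))"

definition baire_space :: "'a::topological_space itself \<Rightarrow> bool" where
  "baire_space _ \<longleftrightarrow>
     (\<forall>\<F>::'a set set. countable \<F> \<and> (\<forall>S\<in>\<F>. open S \<and> closure S = UNIV) \<longrightarrow>
        closure (\<Inter>\<F>) = UNIV)"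

definition bihomomorphism :: "('a::ab_group_add \<Rightarrow> 'b::ab_group_add \<Rightarrow> 'c::ab_group_add) \<Rightarrow> bool" where
  "bihomomorphism u \<longleftrightarrow>
     (\<forall>a a' b. u (a + a') b = u a b + u a' b) \<and> (\<forall>a b b'. u a (b + b') = u a b + u a b')"

end

theory Submission
  imports Defs
begin

lemma small_nbhd:
  fixes W :: "'l::topological_ab_group_add set"
  assumes "open W" "0 \<in> W"
  shows "\<exists>N. open N \<and> 0 \<in> N \<and> (\<forall>a\<in>N. \<forall>b\<in>N. \<forall>c\<in>N. \<forall>d\<in>N. (a + b) - (c + d) \<in> W)"
proof -
  have idt: "((\<lambda>x. x) \<longlongrightarrow> ((0::'l),(0::'l))) (nhds (0,0))" by (simp add: filterlim_ident)
  have t1: "((\<lambda>p. fst p - snd p) \<longlongrightarrow> (0::'l) - 0) (nhds 0 \<times>\<^sub>F nhds 0)"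
    unfolding nhds_prod[symmetric] using tendsto_diff[OF tendsto_fst[OF idt] tendsto_snd[OF idt]] by simp
  have "eventually (\<lambda>p. fst p - snd p \<in> W) (nhds (0::'l) \<times>\<^sub>F nhds 0)"
    using topological_tendstoD[OF t1] assms by simp
  then obtain Q1 where Q1: "eventually Q1 (nhds (0::'l))" "\<And>x y. Q1 x \<Longrightarrow> Q1 y \<Longrightarrow> x - y \<in> W"
    unfolding eventually_prod_same by auto
  have t2: "((\<lambda>p. fst p + snd p) \<longlongrightarrow> (0::'l) + 0) (nhds 0 \<times>\<^sub>F nhds 0)"
    unfolding nhds_prod[symmetric] using tendsto_add[OF tendsto_fst[OF idt] tendsto_snd[OF idt]] by simp
  have "eventually (\<lambda>p. Q1 (fst p + snd p)) (nhds (0::'l) \<times>\<^sub>F nhds 0)"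
  proof -
    obtain S where S: "open S" "0\<in>S" "\<forall>x\<in>S. Q1 x" using Q1(1) unfolding eventually_nhds by auto
    have "eventually (\<lambda>p. fst p + snd p \<in> S) (nhds (0::'l) \<times>\<^sub>F nhds 0)"
      using topological_tendstoD[OF t2] S by simp
    then show ?thesis by (rule eventually_mono) (use S in auto)
  qed
  then obtain Q2 where Q2: "eventually Q2 (nhds (0::'l))" "\<And>x y. Q2 x \<Longrightarrow> Q2 y \<Longrightarrow> Q1 (x + y)"
    unfolding eventually_prod_same by auto
  from Q2(1) obtain N where "open N" "0 \<in> N" "\<forall>x\<in>N. Q2 x"
    unfolding eventually_nhds by auto
  show ?thesis apply (rule exI[of _ N]) using `open N` `0 \<in> N` `\<forall>x\<in>N. Q2 x` Q1(2) Q2(2) by simp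
qed

lemma key:
  fixes u :: "'g::topological_ab_group_add \<Rightarrow> 'h::ab_group_add \<Rightarrow> 'l::topological_ab_group_add"
    and convH :: "'h filter \<Rightarrow> 'h \<Rightarrow> bool"
  assumes baire: "baire_space TYPE('g)"
    and fc: "first_countable_conv convH"
    and bh: "bihomomorphism u"
    and c1: "\<forall>h. conv_continuous top_conv top_conv (\<lambda>g. u g h)"
    and c2: "\<forall>g. conv_continuous convH top_conv (u g)"
    and phi: "(\<phi> \<longlongrightarrow> 0) F"
    and psi: "convH (filtermap \<psi> F) 0"
  shows "((\<lambda>x. u (\<phi> x) (\<psi> x)) \<longlongrightarrow> 0) F"
proof (rule topological_tendstoI)
  fix W :: "'l set" assume W: "open W" "0 \<in> W"
  obtain N where N: "open N" "0 \<in> N" "\<forall>a\<in>N. \<forall>b\<in>N. \<forall>c\<in>N. \<forall>d\<in>N. (a+b)-(c+d) \<in> W"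
    using small_nbhd[OF W] by blast
  from fc psi obtain V where V: "filtermap \<psi> F \<le> V" "countable_base_filter V" "convH V 0"
    unfolding first_countable_conv_def by blast
  from V(2) obtain B where B: "countable B" "\<And>P. eventually P V \<longleftrightarrow> (\<exists>b\<in>B. \<forall>x\<in>b. P x)"
    unfolding countable_base_filter_def by blast
  have add1: "\<And>a a' b. u (a + a') b = u a b + u a' b" and add2: "\<And>a b b'. u a (b + b') = u a b + u a b'"
    using bh unfolding bihomomorphism_def by auto
  have u0: "\<And>g. u g 0 = 0" using add2[of _ 0 0] by simp
  have contg: "continuous_on UNIV (\<lambda>g. u g y)" for y
    unfolding continuous_on_def
  proof
    fix g :: 'g
    have "((\<lambda>g. u g y) \<longlongrightarrow> u g y) (nhds g)"
      using c1 unfolding conv_continuous_def top_conv_def filterlim_def by auto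
    moreover have "at g within UNIV \<le> nhds g" unfolding at_within_def by simp
    ultimately show "((\<lambda>g. u g y) \<longlongrightarrow> u g y) (at g within UNIV)" by (rule tendsto_mono[rotated])
  qed
  define E where "E b = {g. \<forall>y\<in>b. u g y \<in> closure N}" for b
  have closedE: "closed (E b)" for b
  proof -
    have "E b = (\<Inter>y\<in>b. (\<lambda>g. u g y) -` closure N)" by (auto simp: E_def)
    moreover have "closed ((\<lambda>g. u g y) -` closure N)" for y
      using continuous_on_closed_vimage[of UNIV "\<lambda>g. u g y"] contg by auto
    ultimately show ?thesis by auto
  qed
  have cover: "\<exists>b\<in>B. g \<in> E b" for g
  proof -
    have "filtermap (u g) V \<le> nhds (u g 0)" using c2 V(3) unfolding conv_continuous_def top_conv_def by blast
    hence "((u g) \<longlongrightarrow> 0) V" using u0 by (simp add: filterlim_def)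
    hence "eventually (\<lambda>y. u g y \<in> N) V" using N topological_tendstoD by blast
    then obtain b where "b\<in>B" "\<forall>y\<in>b. u g y \<in> N" using B(2) by blast
    then show ?thesis unfolding E_def using closure_subset by blast
  qed
  have "\<exists>b\<in>B. interior (E b) \<noteq> {}"
  proof (rule ccontr)
    assume H: "\<not> ?thesis"
    let ?F = "(\<lambda>b. - E b) ` B"
    have "countable ?F" using B(1) by simp
    moreover have "\<forall>S\<in>?F. open S \<and> closure S = UNIV"
      using H closedE by (auto simp: closure_interior)
    ultimately have "closure (\<Inter>?F) = UNIV" using baire unfolding baire_space_def by blast
    moreover have "\<Inter>?F = {}" using cover by auto
    ultimately show False by simp
  qed
  then obtain b g1 where b: "b \<in> B" "g1 \<in> interior (E b)" by blast
  define U where "U = (\<lambda>g. g1 + g) -` interior (E b)"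
  have cU: "continuous_on UNIV (\<lambda>g. g1 + g)" by (intro continuous_intros)
  have "open U" unfolding U_def using continuous_on_open_vimage[of UNIV "\<lambda>g. g1 + g"] cU
    by (metis open_UNIV open_interior Int_UNIV_right)
  have "0 \<in> U" using b by (simp add: U_def)
  have clN: "\<exists>a\<in>N. \<exists>c\<in>N. z = a + c" if z: "z \<in> closure N" for z
  proof -
    let ?S = "(\<lambda>w. z - w) -` N"
    have cS: "continuous_on UNIV (\<lambda>w. z - w)" by (intro continuous_intros)
    have "open ?S" using continuous_on_open_vimage[of UNIV "\<lambda>w. z - w"] cS N(1)
      by (metis open_UNIV Int_UNIV_right)
    have "z \<in> ?S" using N by simp
    then have "N \<inter> ?S \<noteq> {}" using z `open ?S` unfolding closure_iff_nhds_not_empty by blast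
    then obtain w where "w \<in> N" "z - w \<in> N" by auto
    then show ?thesis by (intro bexI[of _ w] bexI[of _ "z - w"]) auto
  qed
  have inW: "u g y \<in> W" if "g \<in> U" "y \<in> b" for g y
  proof -
    have "g1 + g \<in> E b" "g1 \<in> E b" using that b interior_subset unfolding U_def by auto
    hence "u (g1 + g) y \<in> closure N" "u g1 y \<in> closure N" using that unfolding E_def by auto
    then obtain a1 a2 c1 c2 where "a1\<in>N" "a2\<in>N" "c1\<in>N" "c2\<in>N"
      "u (g1 + g) y = a1 + a2" "u g1 y = c1 + c2" using clN by meson
    moreover have "u g y = u (g1 + g) y - u g1 y" using add1[of g1 g y] by simp
    ultimately show ?thesis using N(3) by auto
  qed
  have ev1: "eventually (\<lambda>x. \<phi> x \<in> U) F" using topological_tendstoD[OF phi] `open U` `0 \<in> U` by blast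
  have "eventually (\<lambda>y. y \<in> b) V" using B(2) b by blast
  hence "eventually (\<lambda>y. y \<in> b) (filtermap \<psi> F)" using V(1) by (rule filter_leD[rotated])
  hence ev2: "eventually (\<lambda>x. \<psi> x \<in> b) F" by (simp add: eventually_filtermap)
  show "eventually (\<lambda>x. u (\<phi> x) (\<psi> x) \<in> W) F" using ev1 ev2 inW by (auto elim: eventually_elim2)
qed

theorem proposition3p4:
  fixes u :: "'g::topological_ab_group_add \<Rightarrow> 'h::ab_group_add \<Rightarrow> 'l::topological_ab_group_add"
    and convH :: "'h filter \<Rightarrow> 'h \<Rightarrow> bool"
  assumes "baire_space TYPE('g)"
    and "convergence_group convH"
    and "first_countable_conv convH"
    and "bihomomorphism u"
    and "\<forall>h. conv_continuous top_conv top_conv (\<lambda>g. u g h)"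
    and "\<forall>g. conv_continuous convH top_conv (u g)"
  shows "conv_continuous (prod_conv top_conv convH) top_conv (\<lambda>(g, h). u g h)"
proof -
  note baire = assms(1) and grp = assms(2) and fc = assms(3) and bh = assms(4)
    and c1 = assms(5) and c2 = assms(6)
  have add1: "\<And>a a' b. u (a + a') b = u a b + u a' b" and add2: "\<And>a b b'. u a (b + b') = u a b + u a b'"
    using bh unfolding bihomomorphism_def by auto
  have diff1: "u (a - b) y = u a y - u b y" for a b y using add1[of "a - b" b y] by (simp add: algebra_simps)
  have diff2: "u x (a - b) = u x a - u x b" for a b x using add2[of x "a - b" b] by (simp add: algebra_simps)
  show ?thesis unfolding conv_continuous_def prod_conv_def top_conv_def
  proof (intro allI impI)
    fix F :: "('g \<times> 'h) filter" and p :: "'g \<times> 'h"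
    assume A: "filtermap fst F \<le> nhds (fst p) \<and> convH (filtermap snd F) (snd p)"
    obtain g0 h0 where p: "p = (g0, h0)" by (cases p)
    have fstt: "(fst \<longlongrightarrow> g0) F" using A p by (simp add: filterlim_def)
    have hc: "convH (filtermap snd F) h0" using A p by simp
    have T1: "((\<lambda>x. u (fst x) h0) \<longlongrightarrow> u g0 h0) F"
    proof -
      have "filtermap (\<lambda>g. u g h0) (filtermap fst F) \<le> nhds (u g0 h0)"
        using c1 A p unfolding conv_continuous_def top_conv_def by auto
      then show ?thesis by (simp add: filterlim_def filtermap_filtermap)
    qed
    have T2: "((\<lambda>x. u g0 (snd x)) \<longlongrightarrow> u g0 h0) F"
    proof -
      have "filtermap (u g0) (filtermap snd F) \<le> nhds (u g0 h0)"
        using c2 hc unfolding conv_continuous_def top_conv_def by auto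
      then show ?thesis by (simp add: filterlim_def filtermap_filtermap)
    qed
    have T3: "((\<lambda>x. u (fst x - g0) (snd x - h0)) \<longlongrightarrow> 0) F"
    proof (rule key[OF baire fc bh c1 c2])
      show "((\<lambda>x. fst x - g0) \<longlongrightarrow> 0) F" using tendsto_diff[OF fstt tendsto_const[of g0]] by simp
      have cs: "convergence_space convH" using grp unfolding convergence_group_def by simp
      have sp: "convH (principal {h0}) h0" using cs unfolding convergence_space_def by simp
      have gg: "\<forall>F G x y. convH F x \<and> convH G y \<longrightarrow>
        convH (filtermap (\<lambda>(a, b). a - b) (F \<times>\<^sub>F G)) (x - y)" using grp unfolding convergence_group_def by simp
      have "convH (filtermap (\<lambda>(a, b). a - b) (filtermap snd F \<times>\<^sub>F principal {h0})) (h0 - h0)"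
        using gg[rule_format, OF conjI[OF hc sp]] .
      moreover have "filtermap (\<lambda>(a, b). a - b) (filtermap snd F \<times>\<^sub>F principal {h0}) = filtermap (\<lambda>x. snd x - h0) F"
        by (simp add: prod_filter_principal_singleton2 filtermap_filtermap)
      ultimately show "convH (filtermap (\<lambda>x. snd x - h0) F) 0" by simp
    qed
    have "((\<lambda>x. u (fst x - g0) (snd x - h0) + u (fst x) h0 + u g0 (snd x) - u g0 h0)
        \<longlongrightarrow> 0 + u g0 h0 + u g0 h0 - u g0 h0) F"
      by (intro tendsto_intros T1 T2 T3)
    moreover have "u (fst x - g0) (snd x - h0) + u (fst x) h0 + u g0 (snd x) - u g0 h0 = u (fst x) (snd x)" for x
      by (simp add: diff1 diff2 algebra_simps)
    ultimately have "((\<lambda>x. u (fst x) (snd x)) \<longlongrightarrow> u g0 h0) F" by simp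
    then show "filtermap (\<lambda>(g, h). u g h) F \<le> nhds ((\<lambda>(g, h). u g h) p)"
      using p by (simp add: filterlim_def case_prod_unfold)
  qed
qed

end
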